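(* Let $s,t$ be positive integers with $\gcd(s,t)=1$, and define the quadratic polynomials $$A=x^2-(3s+t)(3s+2t),\qquad B=x^2-6s\,x+(3s-2t)(3s+t),\qquad C=x^2+6(s+t)\,x+(3s+2t)(3s+5t).$$ Let $P=A^{2s+t}$ and $Q=B^{s+t}C^{s}$ (both of degree $n=4s+2t$). Then $$\deg(P-Q)\le n-5.$$
   Context: This is the Davenport–Zannier pair for the "fork" weighted tree (two black vertices of degree $2s+t$, two white vertices of degree $s+t$, two white vertices of degree $s$); $n-5=(n+1)-(p+q)$ with $p=2$, $q=4$ is the minimal possible degree of $P-Q$. *)

theory Defs
  imports "HOL-Computational_Algebra.Polynomial"
begin

end

theory Submission
  imports Defs
begin

lemma deg_wronsk:
  fixes D Q :: "int poly"
  assumes "degree D = d" "degree Q = n" "0 < d" "d < n" "D \<noteq> 0" "Q \<noteq> 0"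
  shows "d + n - 1 \<le> degree (pderiv D * Q - D * pderiv Q)"
proof -
  have dp: "degree (pderiv D) = d - 1" using assms by (simp add: degree_pderiv)
  have dq: "degree (pderiv Q) = n - 1" using assms by (simp add: degree_pderiv)
  have c1: "coeff (pderiv D * Q) (d + n - 1) = of_nat d * lead_coeff D * lead_coeff Q"
  proof -
    have "coeff (pderiv D * Q) (degree (pderiv D) + degree Q) = lead_coeff (pderiv D) * lead_coeff Q"
      by (rule coeff_mult_degree_sum)
    moreover have "degree (pderiv D) + degree Q = d + n - 1" using dp assms by simp
    moreover have "lead_coeff (pderiv D) = of_nat d * lead_coeff D"
      using dp assms by (simp add: coeff_pderiv)
    ultimately show ?thesis by simp
  qed
  have c2: "coeff (D * pderiv Q) (d + n - 1) = of_nat n * lead_coeff D * lead_coeff Q"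
  proof -
    have "coeff (D * pderiv Q) (degree D + degree (pderiv Q)) = lead_coeff D * lead_coeff (pderiv Q)"
      by (rule coeff_mult_degree_sum)
    moreover have "degree D + degree (pderiv Q) = d + n - 1" using dq assms by simp
    moreover have "lead_coeff (pderiv Q) = of_nat n * lead_coeff Q"
      using dq assms by (simp add: coeff_pderiv)
    ultimately show ?thesis by simp
  qed
  have "coeff (pderiv D * Q - D * pderiv Q) (d + n - 1) = (of_nat d - of_nat n) * lead_coeff D * lead_coeff Q"
    using c1 c2 by (simp add: algebra_simps)
  moreover have "lead_coeff D \<noteq> 0" "lead_coeff Q \<noteq> 0" using assms by auto
  moreover have "(of_nat d - of_nat n) * lead_coeff D * lead_coeff Q \<noteq> (0::int)"
    using assms calculation(2,3) by simp
  ultimately show ?thesis by (metis le_degree)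
qed

lemma generic:
  fixes A B C :: "int poly" and m k s :: nat and c :: int
  assumes m: "m = k + s" and k: "k \<ge> 1" and s: "s \<ge> 1"
    and dA: "degree A = 2" and dB: "degree B = 2" and dC: "degree C = 2"
    and lA: "lead_coeff A = 1" and lB: "lead_coeff B = 1" and lC: "lead_coeff C = 1"
    and W: "smult (of_nat m) (pderiv A * B * C) - smult (of_nat k) (A * pderiv B * C)
            - smult (of_nat s) (A * B * pderiv C) = [:c:]"
  shows "degree (A ^ m - B ^ k * C ^ s) \<le> 2 * m - 5"
proof -
  obtain k' where k': "k = Suc k'" using k by (cases k) auto
  obtain s' where s': "s = Suc s'" using s by (cases s) auto
  obtain m' where m': "m = Suc m'" using m s' by simp
  have A0: "A \<noteq> 0" "B \<noteq> 0" "C \<noteq> 0" using dA dB dC by auto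
  define P where "P = A ^ m"
  define Q where "Q = B ^ k * C ^ s"
  define X where "X = A ^ m' * B ^ k' * C ^ s'"
  have degP: "degree P = 2 * m" using A0 dA by (simp add: P_def degree_power_eq)
  have degQ: "degree Q = 2 * m" using A0 dB dC m
    by (simp add: Q_def degree_power_eq degree_mult_eq)
  have lP: "lead_coeff P = 1" using lA by (simp add: P_def lead_coeff_power)
  have lQ: "lead_coeff Q = 1" using lB lC by (simp add: Q_def lead_coeff_power lead_coeff_mult)
  have wr: "pderiv P * Q - P * pderiv Q = X * [:c:]"
  proof -
    have "pderiv P * Q - P * pderiv Q =
       X * (smult (of_nat m) (pderiv A * B * C) - smult (of_nat k) (A * pderiv B * C)
            - smult (of_nat s) (A * B * pderiv C))"
      unfolding P_def Q_def X_def m' k' s'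
      apply (simp add: pderiv_mult pderiv_power_Suc del: power_Suc)
      by (simp add: algebra_simps)
    then show ?thesis using W by simp
  qed
  have degX: "degree X \<le> 2 * m' + 2 * k' + 2 * s'"
  proof -
    have "degree X \<le> degree (A ^ m' * B ^ k') + degree (C ^ s')"
      unfolding X_def by (rule degree_mult_le)
    also have "\<dots> \<le> degree (A ^ m') + degree (B ^ k') + degree (C ^ s')"
      using degree_mult_le by (simp add: add_right_mono)
    also have "\<dots> \<le> 2 * m' + 2 * k' + 2 * s'"
      using degree_power_le[of A m'] degree_power_le[of B k'] degree_power_le[of C s'] dA dB dC
      by (simp add: mult.commute)
    finally show ?thesis .
  qed
  have degW: "degree (pderiv P * Q - P * pderiv Q) \<le> 4 * m - 6"
  proof -
    have "degree (X * [:c:]) \<le> degree X + degree [:c:]" by (rule degree_mult_le)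
    then show ?thesis using wr degX m m' k' s' by simp
  qed
  define D where "D = P - Q"
  have eq: "pderiv D * Q - D * pderiv Q = pderiv P * Q - P * pderiv Q"
    unfolding D_def by (simp add: pderiv_diff algebra_simps)
  have "degree D \<le> 2 * m" unfolding D_def using degP degQ
    by (metis degree_diff_le le_refl)
  moreover have "coeff D (2 * m) = 0" unfolding D_def using degP degQ lP lQ by simp
  ultimately have dlt: "D = 0 \<or> degree D < 2 * m"
    by (metis le_neq_implies_less leading_coeff_0_iff)
  show ?thesis
  proof (cases "D = 0 \<or> degree D = 0")
    case True then show ?thesis by (auto simp: D_def P_def Q_def)
  next
    case False
    then have "D \<noteq> 0" "degree D > 0" by auto
    moreover have "Q \<noteq> 0" using degQ m k by auto
    ultimately have "degree D + 2 * m - 1 \<le> degree (pderiv D * Q - D * pderiv Q)"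
      using deg_wronsk[of D "degree D" Q "2*m"] dlt degQ by auto
    then have "degree D + 2 * m - 1 \<le> 4 * m - 6" using eq degW by simp
    then have "degree D \<le> 2 * m - 5" using \<open>degree D > 0\<close> m k by arith
    then show ?thesis by (simp add: D_def P_def Q_def)
  qed
qed

theorem mainTheorem2:
  fixes s t :: nat
  assumes "s > 0" and "t > 0" and "gcd s t = 1"
  shows "let si = int s; ti = int t;
             A = [: - ((3*si + ti) * (3*si + 2*ti)), 0, 1 :];
             B = [: (3*si - 2*ti) * (3*si + ti), - 6*si, 1 :];
             C = [: (3*si + 2*ti) * (3*si + 5*ti), 6*(si + ti), 1 :];
             P = A ^ (2*s + t);
             Q = B ^ (s + t) * C ^ s
         in degree (P - Q) \<le> 4*s + 2*t - 5"
proof -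
  define si where "si = int s"
  define ti where "ti = int t"
  define A where "A = [: - ((3*si + ti) * (3*si + 2*ti)), 0, 1 :]"
  define B where "B = [: (3*si - 2*ti) * (3*si + ti), - 6*si, 1 :]"
  define C where "C = [: (3*si + 2*ti) * (3*si + 5*ti), 6*(si + ti), 1 :]"
  have W: "\<exists>c. smult (of_nat (2*s+t)) (pderiv A * B * C) - smult (of_nat (s+t)) (A * pderiv B * C)
            - smult (of_nat s) (A * B * pderiv C) = [:c:]"
    unfolding A_def B_def C_def si_def ti_def
    apply (simp add: pderiv_pCons algebra_simps)
    by (metis diff_add_cancel)
  then obtain c where c: "smult (of_nat (2*s+t)) (pderiv A * B * C) - smult (of_nat (s+t)) (A * pderiv B * C)
            - smult (of_nat s) (A * B * pderiv C) = [:c:]" by blast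
  have "degree (A ^ (2*s+t) - B ^ (s+t) * C ^ s) \<le> 2 * (2*s+t) - 5"
    by (rule generic[OF _ _ _ _ _ _ _ _ _ c]) (use assms in \<open>simp_all add: A_def B_def C_def\<close>)
  then show ?thesis unfolding Let_def A_def B_def C_def si_def ti_def by simp
qed

end
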